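(* Let $\phi\colon(T,X)\to(T,Y)$ be a proximal extension of compact dynamics such that $X$ has a dense set of a.p. points. Then $(T,X)$ is an M-dynamic if and only if $(T,Y)$ is an M-dynamic.
   Context: $T$ is a group or monoid acting continuously. An extension is a continuous equivariant surjection; it is proximal if for every $(x,x')$ with $\phi x=\phi x'$ the orbit closure $\overline{T(x,x')}$ meets the diagonal $\Delta_X$. A point is a.p. if its return times to every neighborhood form a syndetic subset of $T$ (i.e. there is compact $K$ with $Kt\cap A\ne\emptyset$ for all $t$). A dynamic is topologically transitive if $\{t:V\cap tU\ne\emptyset\}\ne\emptyset$ for all nonempty open $U,V$; it is an M-dynamic if it is topologically transitive and has a dense set of a.p. points. *)

theory Defs
  imports "HOL-Analysis.Analysis"
begin

text \<open>A dynamic (T,X) is a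
  continuous left action of T on a topological space X.\<close>

definition top_monoid :: "'a::{monoid_mult,topological_space} itself \<Rightarrow> bool" where
  "top_monoid _ \<longleftrightarrow> continuous_on UNIV (\<lambda>p::'a \<times> 'a. fst p * snd p)"

definition cont_action :: "('a::{monoid_mult,topological_space} \<Rightarrow> 'x::topological_space \<Rightarrow> 'x) \<Rightarrow> bool" where
  "cont_action act \<longleftrightarrow>
     continuous_on UNIV (\<lambda>p::'a \<times> 'x. act (fst p) (snd p)) \<and>
     (\<forall>x. act 1 x = x) \<and> (\<forall>s t x. act (s * t) x = act s (act t x))"

definition extension ::
  "('a::{monoid_mult,topological_space} \<Rightarrow> 'x::topological_space \<Rightarrow> 'x) \<Rightarrow>
   ('a \<Rightarrow> 'y::topological_space \<Rightarrow> 'y) \<Rightarrow> ('x \<Rightarrow> 'y) \<Rightarrow> bool" where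
  "extension actX actY \<phi> \<longleftrightarrow> continuous_on UNIV \<phi> \<and> surj \<phi> \<and>
     (\<forall>t x. \<phi> (actX t x) = actY t (\<phi> x))"

definition proximal_ext ::
  "('a::{monoid_mult,topological_space} \<Rightarrow> 'x::topological_space \<Rightarrow> 'x) \<Rightarrow>
   ('a \<Rightarrow> 'y::topological_space \<Rightarrow> 'y) \<Rightarrow> ('x \<Rightarrow> 'y) \<Rightarrow> bool" where
  "proximal_ext actX actY \<phi> \<longleftrightarrow> extension actX actY \<phi> \<and>
     (\<forall>x x'. \<phi> x = \<phi> x' \<longrightarrow>
        closure (range (\<lambda>t. (actX t x, actX t x'))) \<inter> {(z, z) | z. True} \<noteq> {})"

definition syndetic :: "'a::{monoid_mult,topological_space} set \<Rightarrow> bool" where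
  "syndetic A \<longleftrightarrow> (\<exists>K. compact K \<and> (\<forall>t. (\<lambda>k. k * t) ` K \<inter> A \<noteq> {}))"

definition ap_point :: "('a::{monoid_mult,topological_space} \<Rightarrow> 'x::topological_space \<Rightarrow> 'x) \<Rightarrow> 'x \<Rightarrow> bool" where
  "ap_point act x \<longleftrightarrow> (\<forall>U. open U \<and> x \<in> U \<longrightarrow> syndetic {t. act t x \<in> U})"

definition top_transitive :: "('a::{monoid_mult,topological_space} \<Rightarrow> 'x::topological_space \<Rightarrow> 'x) \<Rightarrow> bool" where
  "top_transitive act \<longleftrightarrow>
     (\<forall>U V. open U \<and> U \<noteq> {} \<and> open V \<and> V \<noteq> {} \<longrightarrow> (\<exists>t. V \<inter> act t ` U \<noteq> {}))"

definition M_dynamic :: "('a::{monoid_mult,topological_space} \<Rightarrow> 'x::topological_space \<Rightarrow> 'x) \<Rightarrow> bool" where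
  "M_dynamic act \<longleftrightarrow> top_transitive act \<and> closure {x. ap_point act x} = UNIV"

end

theory Submission
  imports Defs
begin

lemma act_cont:
  assumes "cont_action act"
  shows "continuous_on UNIV (act t)"
proof -
  have c: "continuous_on UNIV (\<lambda>p::'a \<times> 'b. act (fst p) (snd p))"
    using assms unfolding cont_action_def by blast
  have "continuous_on UNIV (\<lambda>x. (t, x))" by (intro continuous_intros)
  from continuous_on_compose2[OF c this] show ?thesis by simp
qed

lemma regular_pt:
  fixes u :: "'x::t2_space"
  assumes "compact (UNIV :: 'x set)" "open U" "u \<in> U"
  obtains U1 where "open U1" "u \<in> U1" "closure U1 \<subseteq> U"
proof -
  have H: "Hausdorff_space (euclidean :: 'x topology)"
    unfolding Hausdorff_space_def by (metis disjnt_def open_openin separation_t2)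
  have cT: "compact (- U)"
    using assms compact_Int_closed[of UNIV "- U"] by auto
  have "disjnt {u} (- U)" using assms by auto
  from Hausdorff_space_compact_separation[OF H _ _ this] cT
  obtain A B where "open A" "open B" "{u} \<subseteq> A" "- U \<subseteq> B" "disjnt A B"
    by (metis compact_sing compactin_euclidean_iff open_openin)
  moreover have "closure A \<subseteq> - B"
    using calculation by (intro closure_minimal) (auto simp: disjnt_def)
  ultimately show ?thesis using that[of A] by auto
qed

lemma clos_meet:
  assumes "x \<in> closure S" "open T" "x \<in> T"
  shows "S \<inter> T \<noteq> {}"
proof
  assume "S \<inter> T = {}"
  then have "T \<inter> closure S = {}" using open_Int_closure_eq_empty[OF assms(2)] by (simp add: Int_commute)
  then show False using assms by blast
qed

lemma prox_key:
  fixes actX :: "'a::{monoid_mult,topological_space} \<Rightarrow> 'x::t2_space \<Rightarrow> 'x"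
    and actY :: "'a \<Rightarrow> 'y::t2_space \<Rightarrow> 'y"
  assumes ca: "cont_action actX" and cX: "compact (UNIV :: 'x set)"
    and pr: "proximal_ext actX actY \<phi>"
    and ap: "ap_point actX u" and oU: "open U" and uU: "u \<in> U" and eq: "\<phi> z = \<phi> u"
  shows "\<exists>t. actX t z \<in> U"
proof -
  obtain U1 where oU1: "open U1" and uU1: "u \<in> U1" and cU1: "closure U1 \<subseteq> U"
    using regular_pt[OF cX oU uU] by blast
  have "syndetic {t. actX t u \<in> U1}" using ap oU1 uU1 unfolding ap_point_def by blast
  then obtain K where cK: "compact K" and Kp: "\<And>t. (\<lambda>k. k * t) ` K \<inter> {t. actX t u \<in> U1} \<noteq> {}"
    unfolding syndetic_def by blast
  have mul: "\<And>s t x. actX (s * t) x = actX s (actX t x)" using ca unfolding cont_action_def by blast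
  have cpair: "continuous_on UNIV (\<lambda>p::'a \<times> 'x. actX (fst p) (snd p))"
    using ca unfolding cont_action_def by blast
  have pp: "\<And>x x'. \<phi> x = \<phi> x' \<Longrightarrow> closure (range (\<lambda>t. (actX t x, actX t x'))) \<inter> {(v, v) | v. True} \<noteq> {}"
    using pr unfolding proximal_ext_def by blast
  have "closure (range (\<lambda>t. (actX t u, actX t z))) \<inter> {(v, v) | v. True} \<noteq> {}"
    using pp[OF eq[symmetric]] .
  then obtain w where wcl: "(w, w) \<in> closure (range (\<lambda>t. (actX t u, actX t z)))" by blast
  have "closure (range (\<lambda>t. (actX t u, actX t z))) \<subseteq> closure (range (\<lambda>t. actX t u)) \<times> UNIV"
    by (intro closure_minimal) (auto intro: closed_Times closure_subset[THEN subsetD])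
  with wcl have wo: "w \<in> closure (range (\<lambda>t. actX t u))" by blast
  have "\<exists>k\<in>K. actX k w \<in> closure U1"
  proof (rule ccontr)
    assume nk: "\<not> ?thesis"
    define W where "W = (\<lambda>p::'x \<times> 'a. actX (snd p) (fst p)) -` (- closure U1)"
    have cW: "continuous_on UNIV (\<lambda>p::'x \<times> 'a. actX (snd p) (fst p))"
      using continuous_on_compose2[OF cpair, of UNIV "\<lambda>p::'x \<times> 'a. (snd p, fst p)"]
      by (simp add: continuous_intros)
    have "open W" unfolding W_def by (rule open_vimage) (use cW in auto)
    moreover have "{w} \<times> K \<subseteq> W" using nk unfolding W_def by auto
    ultimately have "\<exists>X0. w \<in> X0 \<and> open X0 \<and> X0 \<times> K \<subseteq> W"
      by (rule Elementary_Topology.tube_lemma[OF cK])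
    then obtain X0 where X0: "w \<in> X0" "open X0" "X0 \<times> K \<subseteq> W" by blast
    have "range (\<lambda>t. actX t u) \<inter> X0 \<noteq> {}" by (rule clos_meet[OF wo X0(2) X0(1)])
    then obtain t where tX0: "actX t u \<in> X0" by blast
    obtain k where kK: "k \<in> K" and "actX (k * t) u \<in> U1" using Kp[of t] by blast
    then have "actX k (actX t u) \<in> U1" using mul by simp
    then have "actX k (actX t u) \<in> closure U1" using closure_subset[of U1] by blast
    moreover have "(actX t u, k) \<in> W" using X0 tX0 kK by auto
    ultimately show False unfolding W_def by auto
  qed
  then obtain k where "actX k w \<in> U" using cU1 by blast
  define Ob where "Ob = (\<lambda>p::'x \<times> 'x. actX k (snd p)) -` U"
  have "continuous_on UNIV (\<lambda>p::'x \<times> 'x. actX k (snd p))"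
    using continuous_on_compose2[OF act_cont[OF ca, of k], of UNIV snd]
    by (simp add: continuous_intros)
  then have "open Ob" unfolding Ob_def using oU by (intro open_vimage) auto
  moreover have "(w, w) \<in> Ob" unfolding Ob_def using \<open>actX k w \<in> U\<close> by simp
  ultimately have "range (\<lambda>t. (actX t u, actX t z)) \<inter> Ob \<noteq> {}" by (intro clos_meet[OF wcl])
  then obtain t where "(actX t u, actX t z) \<in> Ob" by blast
  then have "actX (k * t) z \<in> U" unfolding Ob_def using mul by simp
  then show ?thesis by blast
qed


lemma prox_open:
  fixes actX :: "'a::{monoid_mult,topological_space} \<Rightarrow> 'x::t2_space \<Rightarrow> 'x"
    and actY :: "'a \<Rightarrow> 'y::t2_space \<Rightarrow> 'y"
    and \<phi> :: "'x \<Rightarrow> 'y"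
  assumes ca: "cont_action actX" and cX: "compact (UNIV :: 'x set)"
    and pr: "proximal_ext actX actY \<phi>"
    and dn: "closure {x. ap_point actX x} = UNIV"
    and oU: "open U" and ne: "U \<noteq> {}"
  shows "\<exists>P. open P \<and> P \<noteq> {} \<and> \<phi> -` P \<subseteq> {z. \<exists>t. actX t z \<in> U}"
proof -
  define G where "G = {z. \<exists>t. actX t z \<in> U}"
  have "G = (\<Union>t. actX t -` U)" unfolding G_def by auto
  moreover have "\<And>t. open (actX t -` U)" using oU act_cont[OF ca] open_vimage by blast
  ultimately have oG: "open G" by (simp add: open_UN)
  obtain u0 where "u0 \<in> U" using ne by blast
  then have "{x. ap_point actX x} \<inter> U \<noteq> {}"
    using clos_meet[of u0 "{x. ap_point actX x}" U] dn oU by simp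
  then obtain u where apu: "ap_point actX u" and uU: "u \<in> U" by blast
  have cphi: "continuous_on UNIV \<phi>" using pr unfolding proximal_ext_def extension_def by blast
  have "compact (- G)" using cX oG compact_Int_closed[of UNIV "- G"] by auto
  then have "compact (\<phi> ` (- G))" using cphi compact_continuous_image continuous_on_subset by blast
  then have oP: "open (- \<phi> ` (- G))" by (intro open_Compl compact_imp_closed)
  have "\<phi> u \<in> - \<phi> ` (- G)"
  proof
    assume "\<phi> u \<in> \<phi> ` (- G)"
    then obtain z where "z \<notin> G" "\<phi> z = \<phi> u" by auto
    with prox_key[OF ca cX pr apu oU uU] show False unfolding G_def by blast
  qed
  moreover have "\<phi> -` (- \<phi> ` (- G)) \<subseteq> G" by auto
  ultimately show ?thesis using oP unfolding G_def by blast
qed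

theorem lemma3p8:
  fixes actX :: "'a::{monoid_mult,topological_space} \<Rightarrow> 'x::t2_space \<Rightarrow> 'x"
    and actY :: "'a \<Rightarrow> 'y::t2_space \<Rightarrow> 'y"
    and \<phi> :: "'x \<Rightarrow> 'y"
  assumes "top_monoid TYPE('a)"
    and "cont_action actX" and "cont_action actY"
    and "compact (UNIV :: 'x set)" and "compact (UNIV :: 'y set)"
    and "proximal_ext actX actY \<phi>"
    and "closure {x. ap_point actX x} = UNIV"
  shows "M_dynamic actX \<longleftrightarrow> M_dynamic actY"
proof -
  note ca = assms(2) and cX = assms(4) and pr = assms(6) and dn = assms(7)
  have cphi: "continuous_on UNIV \<phi>" and sphi: "surj \<phi>"
    and eqv: "\<And>t x. \<phi> (actX t x) = actY t (\<phi> x)"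
    using pr unfolding proximal_ext_def extension_def by blast+
  have mul: "\<And>s t x. actX (s * t) x = actX s (actX t x)" using ca unfolding cont_action_def by blast
  have apY: "ap_point actY (\<phi> x)" if "ap_point actX x" for x
    unfolding ap_point_def
  proof (intro allI impI)
    fix U assume U: "open U \<and> \<phi> x \<in> U"
    have "open (\<phi> -` U)" using U cphi by (intro open_vimage) auto
    then have "syndetic {t. actX t x \<in> \<phi> -` U}" using that U unfolding ap_point_def by auto
    moreover have "{t. actX t x \<in> \<phi> -` U} = {t. actY t (\<phi> x) \<in> U}" using eqv by auto
    ultimately show "syndetic {t. actY t (\<phi> x) \<in> U}" by simp
  qed
  have denY: "closure {y. ap_point actY y} = UNIV"
  proof -
    have "\<phi> ` closure {x. ap_point actX x} \<subseteq> closure (\<phi> ` {x. ap_point actX x})"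
      by (rule image_closure_subset[OF continuous_on_subset[OF cphi subset_UNIV] closed_closure closure_subset])
    moreover have "\<phi> ` {x. ap_point actX x} \<subseteq> {y. ap_point actY y}" using apY by auto
    ultimately have "UNIV \<subseteq> closure {y. ap_point actY y}"
      using dn sphi closure_mono by (metis order_trans)
    then show ?thesis by blast
  qed
  have tXY: "top_transitive actY" if "top_transitive actX"
    unfolding top_transitive_def
  proof (intro allI impI)
    fix U V :: "'y set" assume H: "open U \<and> U \<noteq> {} \<and> open V \<and> V \<noteq> {}"
    have tx: "\<And>A B. open A \<Longrightarrow> A \<noteq> {} \<Longrightarrow> open B \<Longrightarrow> B \<noteq> {} \<Longrightarrow> \<exists>t. B \<inter> actX t ` A \<noteq> {}"
      using that unfolding top_transitive_def by blast
    have o1: "open (\<phi> -` U)" "open (\<phi> -` V)" using H cphi by (auto intro!: open_vimage)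
    have n1: "\<phi> -` U \<noteq> {}" "\<phi> -` V \<noteq> {}" using H sphi surj_vimage_empty by blast+
    obtain t where "\<phi> -` V \<inter> actX t ` (\<phi> -` U) \<noteq> {}"
      using tx[OF o1(1) n1(1) o1(2) n1(2)] by blast
    then obtain x where "\<phi> x \<in> U" "\<phi> (actX t x) \<in> V" by auto
    then show "\<exists>t. V \<inter> actY t ` U \<noteq> {}" using eqv by auto
  qed
  have tYX: "top_transitive actX" if "top_transitive actY"
    unfolding top_transitive_def
  proof (intro allI impI)
    fix U V :: "'x set" assume H: "open U \<and> U \<noteq> {} \<and> open V \<and> V \<noteq> {}"
    have oU: "open U" and nU: "U \<noteq> {}" and oV: "open V" and nV: "V \<noteq> {}" using H by auto
    obtain PU where PU: "open PU" "PU \<noteq> {}" "\<phi> -` PU \<subseteq> {z. \<exists>t. actX t z \<in> U}"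
      using prox_open[OF ca cX pr dn oU nU] by blast
    obtain PV where PV: "open PV" "PV \<noteq> {}" "\<phi> -` PV \<subseteq> {z. \<exists>t. actX t z \<in> V}"
      using prox_open[OF ca cX pr dn oV nV] by blast
    have ty: "\<And>A B. open A \<Longrightarrow> A \<noteq> {} \<Longrightarrow> open B \<Longrightarrow> B \<noteq> {} \<Longrightarrow> \<exists>t. B \<inter> actY t ` A \<noteq> {}"
      using that unfolding top_transitive_def by blast
    obtain s where "PU \<inter> actY s ` PV \<noteq> {}" using ty[OF PV(1,2) PU(1,2)] by blast
    then obtain y where yPV: "y \<in> PV" and ysPU: "actY s y \<in> PU" by blast
    obtain z where zy: "\<phi> z = y" using sphi by (metis surj_def)
    have "z \<in> \<phi> -` PV" using zy yPV by simp
    then obtain r where zr: "actX r z \<in> V" using PV(3) by blast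
    have "\<phi> (actX s z) \<in> PU" using eqv zy ysPU by simp
    then have "actX s z \<in> \<phi> -` PU" by simp
    then obtain t0 where "actX t0 (actX s z) \<in> U" using PU(3) by blast
    then have zt: "actX (t0 * s) z \<in> U" using mul by simp
    define GU where "GU = (\<Union>t. actX t -` U)"
    define GV where "GV = (\<Union>t. actX t -` V)"
    have "\<And>t. open (actX t -` U)" "\<And>t. open (actX t -` V)"
      using oU oV act_cont[OF ca] open_vimage by blast+
    then have oG: "open (GU \<inter> GV)" unfolding GU_def GV_def by (intro open_Int open_UN) auto
    have "z \<in> GU \<inter> GV" using zt zr unfolding GU_def GV_def by blast
    then have "{x. ap_point actX x} \<inter> (GU \<inter> GV) \<noteq> {}"
      using clos_meet[of z "{x. ap_point actX x}" "GU \<inter> GV"] dn oG by simp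
    then obtain a t r where apa: "ap_point actX a" and at: "actX t a \<in> U" and ar: "actX r a \<in> V"
      unfolding GU_def GV_def by blast
    have "open (actX r -` V)" using oV act_cont[OF ca] open_vimage by blast
    then have "syndetic {s. actX s a \<in> actX r -` V}" using apa ar unfolding ap_point_def by blast
    then obtain K where "\<And>t. (\<lambda>k. k * t) ` K \<inter> {s. actX s a \<in> actX r -` V} \<noteq> {}"
      unfolding syndetic_def by blast
    then obtain k where "actX (k * t) a \<in> actX r -` V" by blast
    then have "actX (r * k) (actX t a) \<in> V" using mul by simp
    then show "\<exists>t. V \<inter> actX t ` U \<noteq> {}" using at by blast
  qed
  have "M_dynamic actX \<longleftrightarrow> top_transitive actX" unfolding M_dynamic_def using dn by simp
  moreover have "M_dynamic actY \<longleftrightarrow> top_transitive actY" unfolding M_dynamic_def using denY by simp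
  ultimately show ?thesis using tXY tYX by blast
qed

end
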